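(* For every standard allocation rule $f$, every instance and every seller $i\in S$, we have $r^\star\ge r_i$, where $r^\star$ is the stopping rate of $\mathrm{EnvyFree}(f)$ on the cost vector $c$ and $r_i$ is the stopping rate of $\mathrm{EnvyFree}(f)$ on the cost vector obtained from $c$ by replacing $c_i$ with $0$.
   Context: Setting: a buyer with budget $B>0$ faces a finite set $S$ of sellers; seller $i$ owns one divisible item giving utility $u_i>0$ and has cost $c_i\ge0$. A standard allocation rule is a non-increasing $f:[0,\infty)\to[0,1]$ with $f(0)=1$, $f(e-1)=0$. For $r>0$: $f_r(x)=f(x/r)$, $Q_r(x)=xf_r(x)+\int_x^\infty f_r(y)\,dy$, $P_{i,r}(x)=u_iQ_r(x/u_i)$. The stopping rate of $\mathrm{EnvyFree}(f)$ on a cost vector $c'$ is the value at which, decreasing $r$ from $\infty$, the nondecreasing function $r\mapsto\sum_iP_{i,r}(c'_i)$ first equals $B$. *)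

theory Defs
  imports "HOL-Analysis.Analysis"
begin

definition standard_alloc :: "(real \<Rightarrow> real) \<Rightarrow> bool" where
  "standard_alloc f \<longleftrightarrow>
     (\<forall>x y. 0 \<le> x \<longrightarrow> x \<le> y \<longrightarrow> f y \<le> f x) \<and>
     (\<forall>x\<ge>0. 0 \<le> f x \<and> f x \<le> 1) \<and>
     f 0 = 1 \<and> f (exp 1 - 1) = 0"

definition f_r :: "(real \<Rightarrow> real) \<Rightarrow> real \<Rightarrow> real \<Rightarrow> real" where
  "f_r f r x = f (x / r)"

definition Q_r :: "(real \<Rightarrow> real) \<Rightarrow> real \<Rightarrow> real \<Rightarrow> real" where
  "Q_r f r x = x * f_r f r x + integral {x..} (\<lambda>y. f_r f r y)"

definition P_r :: "(real \<Rightarrow> real) \<Rightarrow> real \<Rightarrow> real \<Rightarrow> real \<Rightarrow> real" where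
  "P_r f ui r x = ui * Q_r f r (x / ui)"

definition total_pay :: "(real \<Rightarrow> real) \<Rightarrow> 'a set \<Rightarrow> ('a \<Rightarrow> real) \<Rightarrow> ('a \<Rightarrow> real) \<Rightarrow> real \<Rightarrow> real" where
  "total_pay f S u c' r = (\<Sum>i\<in>S. P_r f (u i) r (c' i))"

text \<open>Stopping rate: decreasing r from infinity, the first value at which the
  nondecreasing function r \<mapsto> total_pay reaches B, i.e. the supremum of the
  rates r > 0 whose total payment is at most B.\<close>
definition stopping_rate :: "(real \<Rightarrow> real) \<Rightarrow> real \<Rightarrow> 'a set \<Rightarrow> ('a \<Rightarrow> real) \<Rightarrow> ('a \<Rightarrow> real) \<Rightarrow> real" where
  "stopping_rate f B S u c' = Sup {r. 0 < r \<and> total_pay f S u c' r \<le> B}"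

end

theory Submission imports Defs begin

context
  fixes f :: "real \<Rightarrow> real" and r :: real
  assumes sa: "standard_alloc f" and rpos: "0 < r"
begin

lemma g_bnd: "0 \<le> y \<Longrightarrow> 0 \<le> f (y/r) \<and> f (y/r) \<le> 1"
  using sa rpos unfolding standard_alloc_def by auto

lemma g_anti: "0 \<le> y \<Longrightarrow> y \<le> y' \<Longrightarrow> f (y'/r) \<le> f (y/r)"
proof -
  assume a: "0 \<le> y" "y \<le> y'"
  have "0 \<le> y/r" "y/r \<le> y'/r" using a rpos by (auto intro!: divide_right_mono)
  then show ?thesis using sa unfolding standard_alloc_def by blast
qed

lemma e1: "0 \<le> exp (1::real) - 1"
  by (smt (verit) one_le_exp_iff)

lemma g_zero: "r * (exp 1 - 1) \<le> y \<Longrightarrow> f (y/r) = 0"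
proof -
  assume h: "r * (exp 1 - 1) \<le> y"
  have "exp 1 - 1 \<le> y / r" using h rpos by (simp add: field_simps)
  moreover have "0 \<le> y/r" using e1 calculation by linarith
  have "f (y/r) \<le> f (exp 1 - 1)" using sa e1 calculation unfolding standard_alloc_def by blast
  moreover have "0 \<le> f (y/r)" using sa \<open>0 \<le> y/r\<close> unfolding standard_alloc_def by blast
  ultimately show ?thesis using sa unfolding standard_alloc_def by linarith
qed

lemma g_int: "0 \<le> a \<Longrightarrow> (\<lambda>y. f (y/r)) integrable_on {a..b}"
proof -
  assume a: "0 \<le> a"
  have "mono_on {a..b} (\<lambda>y. - f (y/r))"
    unfolding mono_on_def using g_anti a by auto
  then have "(\<lambda>y. - f (y/r)) integrable_on {a..b}" by (rule integrable_on_mono_on)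
  then have "(\<lambda>y. - (- f (y/r))) integrable_on {a..b}" by (rule integrable_neg)
  then show ?thesis by simp
qed

lemma g_tail: "0 \<le> x \<Longrightarrow> x \<le> b \<Longrightarrow> r * (exp 1 - 1) \<le> b \<Longrightarrow>
   integral {x..} (\<lambda>y. f (y/r)) = integral {x..b} (\<lambda>y. f (y/r))"
proof -
  assume x: "0 \<le> x" "x \<le> b" and b: "r * (exp 1 - 1) \<le> b"
  have "integral {x..} (\<lambda>y. f (y/r)) = integral {x..} (\<lambda>y. if y \<in> {x..b} then f (y/r) else 0)"
    by (rule integral_cong) (use b g_zero in auto)
  also have "\<dots> = integral ({x..b} \<inter> {x..}) (\<lambda>y. f (y/r))"
    by (rule integral_restrict_Int)
  also have "{x..b} \<inter> {x..} = {x..b}" by auto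
  finally show ?thesis .
qed

lemma g_int_nonneg: "0 \<le> a \<Longrightarrow> 0 \<le> integral {a..b} (\<lambda>y. f (y/r))"
  by (rule integral_nonneg) (use g_int g_bnd in auto)

lemma g_int_lower: "0 \<le> a \<Longrightarrow> a \<le> b \<Longrightarrow> (b - a) * f (b/r) \<le> integral {a..b} (\<lambda>y. f (y/r))"
proof -
  assume a: "0 \<le> a" "a \<le> b"
  have "integral {a..b} (\<lambda>y. f (b/r)) \<le> integral {a..b} (\<lambda>y. f (y/r))"
    by (rule integral_le) (use g_int a g_anti in auto)
  then show ?thesis using a by simp
qed

lemma g_int_upper: "0 \<le> a \<Longrightarrow> a \<le> b \<Longrightarrow> integral {a..b} (\<lambda>y. f (y/r)) \<le> b - a"
proof -
  assume a: "0 \<le> a" "a \<le> b"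
  have "integral {a..b} (\<lambda>y. f (y/r)) \<le> integral {a..b} (\<lambda>y. 1::real)"
    by (rule integral_le) (use g_int a g_bnd in auto)
  then show ?thesis using a by simp
qed

lemma Q_anti:
  assumes x: "0 \<le> x" "x \<le> x'"
  shows "Q_r f r x' \<le> Q_r f r x"
proof -
  define b where "b = max x' (r * (exp 1 - 1))"
  have t1: "integral {x..} (\<lambda>y. f (y/r)) = integral {x..b} (\<lambda>y. f (y/r))"
    by (rule g_tail) (use x in \<open>auto simp: b_def\<close>)
  have t2: "integral {x'..} (\<lambda>y. f (y/r)) = integral {x'..b} (\<lambda>y. f (y/r))"
    by (rule g_tail) (use x in \<open>auto simp: b_def\<close>)
  have c: "integral {x..x'} (\<lambda>y. f (y/r)) + integral {x'..b} (\<lambda>y. f (y/r)) = integral {x..b} (\<lambda>y. f (y/r))"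
    by (rule Henstock_Kurzweil_Integration.integral_combine) (use x g_int in \<open>auto simp: b_def\<close>)
  have l: "(x' - x) * f (x'/r) \<le> integral {x..x'} (\<lambda>y. f (y/r))"
    using g_int_lower x by auto
  have m: "x * f (x'/r) \<le> x * f (x/r)" using g_anti x by (simp add: mult_left_mono)
  show ?thesis unfolding Q_r_def f_r_def using t1 t2 c l m by (simp add: algebra_simps)
qed

lemma Q_nonneg: "0 \<le> x \<Longrightarrow> 0 \<le> Q_r f r x"
proof -
  assume x: "0 \<le> x"
  define b where "b = max x (r * (exp 1 - 1))"
  have "integral {x..} (\<lambda>y. f (y/r)) = integral {x..b} (\<lambda>y. f (y/r))"
    by (rule g_tail) (use x in \<open>auto simp: b_def\<close>)
  moreover have "0 \<le> integral {x..b} (\<lambda>y. f (y/r))" using g_int_nonneg x by auto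
  moreover have "0 \<le> x * f (x/r)" using x g_bnd by auto
  ultimately show ?thesis unfolding Q_r_def f_r_def by simp
qed

lemma Q_upper: "0 \<le> x \<Longrightarrow> Q_r f r x \<le> r * (exp 1 - 1)"
proof -
  assume x: "0 \<le> x"
  have "Q_r f r x \<le> Q_r f r 0" by (rule Q_anti) (use x in auto)
  also have "Q_r f r 0 = integral {0..r * (exp 1 - 1)} (\<lambda>y. f (y/r))"
    unfolding Q_r_def f_r_def using g_tail[of 0 "r * (exp 1 - 1)"] e1 rpos by simp
  also have "\<dots> \<le> r * (exp 1 - 1)" using g_int_upper[of 0 "r * (exp 1 - 1)"] e1 rpos by simp
  finally show ?thesis .
qed

lemma Q_lower:
  assumes d: "0 < d" and x: "0 \<le> x" "x \<le> r * d"
  shows "(r * d - x) * f d \<le> Q_r f r x"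
proof -
  define b where "b = max (r*d) (r * (exp 1 - 1))"
  have t1: "integral {x..} (\<lambda>y. f (y/r)) = integral {x..b} (\<lambda>y. f (y/r))"
    by (rule g_tail) (use x in \<open>auto simp: b_def\<close>)
  have c: "integral {x..r*d} (\<lambda>y. f (y/r)) + integral {r*d..b} (\<lambda>y. f (y/r)) = integral {x..b} (\<lambda>y. f (y/r))"
    by (rule Henstock_Kurzweil_Integration.integral_combine) (use x g_int in \<open>auto simp: b_def\<close>)
  have l: "(r*d - x) * f (r*d/r) \<le> integral {x..r*d} (\<lambda>y. f (y/r))"
    using g_int_lower[of x "r*d"] x by blast
  have n: "0 \<le> integral {r*d..b} (\<lambda>y. f (y/r))" using g_int_nonneg x by auto
  have m: "0 \<le> x * f (x/r)" using x g_bnd by auto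
  have "r*d/r = d" using rpos by simp
  then show ?thesis unfolding Q_r_def f_r_def using t1 c l m n by simp
qed

lemma Q_zero_case:
  assumes z: "\<forall>d>0. f d \<le> 0" and x: "0 \<le> x"
  shows "Q_r f r x = 0"
proof -
  have fz: "\<And>y. 0 < y \<Longrightarrow> f (y/r) = 0"
  proof -
    fix y :: real assume "0 < y"
    then have "0 < y/r" using rpos by simp
    then show "f (y/r) = 0" using z g_bnd[of y] \<open>0<y\<close> by force
  qed
  define b where "b = max x (r * (exp 1 - 1))"
  have t1: "integral {x..} (\<lambda>y. f (y/r)) = integral {x..b} (\<lambda>y. f (y/r))"
    by (rule g_tail) (use x in \<open>auto simp: b_def\<close>)
  have "integral {x..b} (\<lambda>y. f (y/r)) = integral {x..b} (\<lambda>y. 0::real)"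
    by (rule integral_spike[of "{0}"]) (use fz x in auto)
  then have "integral {x..b} (\<lambda>y. f (y/r)) = 0" by simp
  moreover have "x * f (x/r) = 0" using fz x by (cases "x = 0") auto
  ultimately show ?thesis unfolding Q_r_def f_r_def using t1 by simp
qed

end

theorem lemma1:
  fixes f :: "real \<Rightarrow> real" and B :: real and S :: "'a set"
    and u c :: "'a \<Rightarrow> real" and i :: 'a
  assumes "standard_alloc f"
    and "0 < B"
    and "finite S"
    and "\<forall>j\<in>S. 0 < u j"
    and "\<forall>j\<in>S. 0 \<le> c j"
    and "i \<in> S"
  shows "stopping_rate f B S u c \<ge> stopping_rate f B S u (c(i := 0))"
proof -
  note sa = assms(1) and Bp = assms(2) and fin = assms(3) and up = assms(4) and cp = assms(5) and iS = assms(6)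
  define c0 where "c0 = c(i := 0)"
  have c0p: "\<forall>j\<in>S. 0 \<le> c0 j" using cp by (simp add: c0_def)
  define A0 where "A0 = {r. 0 < r \<and> total_pay f S u c0 r \<le> B}"
  define Ac where "Ac = {r. 0 < r \<and> total_pay f S u c r \<le> B}"
  have le: "total_pay f S u c r \<le> total_pay f S u c0 r" if r: "0 < r" for r
    unfolding total_pay_def P_r_def
  proof (rule sum_mono)
    fix j assume j: "j \<in> S"
    show "u j * Q_r f r (c j / u j) \<le> u j * Q_r f r (c0 j / u j)"
    proof (cases "j = i")
      case True
      have "Q_r f r (c j / u j) \<le> Q_r f r 0"
        by (rule Q_anti[OF sa r]) (use j up cp in auto)
      then show ?thesis using True up j by (simp add: c0_def)
    next
      case False then show ?thesis by (simp add: c0_def)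
    qed
  qed
  have sub: "A0 \<subseteq> Ac" unfolding A0_def Ac_def using le by force
  define U where "U = (\<Sum>j\<in>S. u j)"
  have Up: "0 < U" unfolding U_def using fin iS up
    by (metis sum_pos empty_iff)
  have e1: "0 < exp (1::real) - 1" by (smt (verit) exp_gt_one)
  define r0 where "r0 = B / ((exp 1 - 1) * U + 1)"
  have den: "0 < (exp 1 - 1) * U + 1" using e1 Up by (smt (verit) mult_pos_pos)
  have r0p: "0 < r0" unfolding r0_def using Bp den by simp
  have "total_pay f S u c0 r0 \<le> (\<Sum>j\<in>S. u j * (r0 * (exp 1 - 1)))"
    unfolding total_pay_def P_r_def
  proof (rule sum_mono)
    fix j assume j: "j \<in> S"
    have "Q_r f r0 (c0 j / u j) \<le> r0 * (exp 1 - 1)"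
      by (rule Q_upper[OF sa r0p]) (use j up c0p in auto)
    then show "u j * Q_r f r0 (c0 j / u j) \<le> u j * (r0 * (exp 1 - 1))"
      using up j by (simp add: mult_left_mono)
  qed
  also have "\<dots> = r0 * ((exp 1 - 1) * U)" unfolding U_def
    by (simp add: sum_distrib_left[symmetric] sum_distrib_right[symmetric] mult.assoc mult.left_commute mult.commute)
  also have "\<dots> \<le> r0 * ((exp 1 - 1) * U + 1)" using r0p by simp
  also have "\<dots> = B" unfolding r0_def using den by simp
  finally have "r0 \<in> A0" unfolding A0_def using r0p by simp
  then have ne: "A0 \<noteq> {}" by auto
  show ?thesis
  proof (cases "\<exists>d>0. f d > 0")
    case True
    then obtain d where d: "0 < d" "0 < f d" by auto
    have ui: "0 < u i" "0 \<le> c i" using up cp iS by auto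
    define R where "R = (B / f d + c i) / (u i * d)"
    have "\<forall>r\<in>Ac. r \<le> R"
    proof (rule ballI, rule ccontr)
      fix r assume rA: "r \<in> Ac" and nr: "\<not> r \<le> R"
      then have rp: "0 < r" and tB: "total_pay f S u c r \<le> B" unfolding Ac_def by auto
      have "R < r" using nr by simp
      then have "B / f d + c i < r * (u i * d)" unfolding R_def using ui d
        by (simp add: divide_less_eq mult.commute)
      then have h1: "B / f d < u i * r * d - c i" by (simp add: algebra_simps)
      have "0 < B / f d" using Bp d by simp
      then have xle: "c i / u i \<le> r * d" using h1 ui
        by (simp add: divide_le_eq algebra_simps)
      have "(r * d - c i / u i) * f d \<le> Q_r f r (c i / u i)"
        by (rule Q_lower[OF sa rp d(1)]) (use ui xle in auto)
      then have "u i * ((r * d - c i / u i) * f d) \<le> u i * Q_r f r (c i / u i)"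
        using ui by (simp add: mult_left_mono)
      moreover have "u i * ((r * d - c i / u i) * f d) = (u i * r * d - c i) * f d"
        using ui by (simp add: algebra_simps)
      moreover have "B < (u i * r * d - c i) * f d" using h1 d by (simp add: divide_less_eq)
      moreover have "u i * Q_r f r (c i / u i) \<le> total_pay f S u c r"
        unfolding total_pay_def P_r_def
      proof (rule member_le_sum[OF iS _ fin])
        fix j assume "j \<in> S - {i}"
        then have j: "j \<in> S" by auto
        have "0 \<le> Q_r f r (c j / u j)" by (rule Q_nonneg[OF sa rp]) (use j up cp in auto)
            moreover have "0 < u j" using up j by simp
        ultimately show "0 \<le> u j * Q_r f r (c j / u j)" by simp
      qed
      ultimately show False using tB by linarith
    qed
    then have "bdd_above Ac" by (auto intro: bdd_aboveI2)
    then show ?thesis unfolding stopping_rate_def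
      using cSup_subset_mono[OF ne _ sub] by (simp add: A0_def Ac_def c0_def)
  next
    case False
    then have z: "\<forall>d>0. f d \<le> 0" by auto
    have tz: "total_pay f S u c' r = 0" if "0 < r" "\<forall>j\<in>S. 0 \<le> c' j" for c' r
      unfolding total_pay_def P_r_def
      using Q_zero_case[OF sa that(1) z] that(2) up by (intro sum.neutral) auto
    have "A0 = Ac" unfolding A0_def Ac_def using tz[of _ c] tz[of _ c0] cp c0p Bp by auto
    then show ?thesis unfolding stopping_rate_def by (simp add: A0_def Ac_def c0_def)
  qed
qed

end
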